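(* Assume $s\ge n-r+1$ and let $1\le j_1<\dots<j_{n-r+1}\le s$. Put $$A(j_1,\dots,j_{n-r+1})=\sum_{\sigma\in\mathfrak S_{n+1}}\mathrm{sign}(\sigma)\frac{\partial F_1}{\partial X_{\sigma(0)}}\cdots\frac{\partial F_r}{\partial X_{\sigma(r-1)}}\cdot\frac{\partial G_{j_1}}{\partial X_{\sigma(r)}}\cdots\frac{\partial G_{j_{n-r+1}}}{\partial X_{\sigma(n)}},$$ where $\mathfrak S_{n+1}$ is the group of permutations of $\{0,\dots,n\}$, and $$A'=A(j_1,\dots,j_{n-r+1})\cdot\frac{G_1\cdots G_s}{G_{j_1}\cdots G_{j_{n-r+1}}}\in P^{\mathbf d+\mathbf e-n-1}.$$ Then $A'\mu_i\in J$ and $A'\lambda_j\in J$ for all $1\le i\le r$ and $1\le j\le s$.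
   Context: Let $k$ be a field of characteristic zero, integers $r,s\ge0$ with $r+s\ge1$, $n\ge2$, $d_i,e_j\ge1$, $\mathbf d=\sum_id_i$, $\mathbf e=\sum_je_j$. $P=k[X_0,\dots,X_n]$ with degree-$l$ part $P^l$, and $A=P[\mu_1,\dots,\mu_r,\lambda_1,\dots,\lambda_s]$. Fix $F_i\in P^{d_i}$ ($1\le i\le r$), $G_j\in P^{e_j}$ ($1\le j\le s$) such that the hypersurfaces $\{F_i=0\}$, $\{G_j=0\}$ of $\mathbb P^n$ are smooth and intersect transversally. $J\subset A$ is the ideal generated by $\sum_i\frac{\partial F_i}{\partial X_k}\mu_i+\sum_j\frac{\partial G_j}{\partial X_k}\lambda_j$ ($0\le k\le n$), $F_i$ ($1\le i\le r$), and $G_j\lambda_j$ ($1\le j\le s$). *)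

theory Defs
  imports "HOL-Library.Poly_Mapping" "HOL-Combinatorics.Permutations"
          "HOL-Algebra.Algebraic_Closure_Type"
begin

text \<open>Variables of the ring A = k[X_0..X_n, mu_1..mu_r, lambda_1..lambda_s].\<close>
datatype var = Xv nat | Mu nat | La nat

type_synonym 'k mpoly = "(var \<Rightarrow>\<^sub>0 nat) \<Rightarrow>\<^sub>0 'k"

definition Var :: "var \<Rightarrow> 'k::comm_ring_1 mpoly" where
  "Var v = Poly_Mapping.single (Poly_Mapping.single v 1) 1"

definition pdX :: "nat \<Rightarrow> 'k::comm_ring_1 mpoly \<Rightarrow> 'k mpoly" where
  "pdX k p = (\<Sum>m\<in>Poly_Mapping.keys p.
      Poly_Mapping.single (m - Poly_Mapping.single (Xv k) 1)
        (of_nat (Poly_Mapping.lookup m (Xv k)) * Poly_Mapping.lookup p m))"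

text \<open>p lies in P^l: a polynomial in X_0..X_n only, homogeneous of degree l.\<close>
definition in_Pdeg :: "nat \<Rightarrow> nat \<Rightarrow> 'k::comm_ring_1 mpoly \<Rightarrow> bool" where
  "in_Pdeg n l p \<longleftrightarrow> (\<forall>m\<in>Poly_Mapping.keys p.
      (\<forall>v\<in>Poly_Mapping.keys m. \<exists>k\<le>n. v = Xv k) \<and>
      (\<Sum>v\<in>Poly_Mapping.keys m. Poly_Mapping.lookup m v) = l)"

text \<open>Evaluation of a polynomial with coefficients in k at a point x of
  K^(n+1), via a ring embedding e of k into K (other variables are sent to 0).\<close>
definition evalX :: "('k::comm_ring_1 \<Rightarrow> 'K::comm_ring_1) \<Rightarrow> (nat \<Rightarrow> 'K) \<Rightarrow> 'k mpoly \<Rightarrow> 'K" where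
  "evalX e x p = (\<Sum>m\<in>Poly_Mapping.keys p. e (Poly_Mapping.lookup p m) *
      (\<Prod>v\<in>Poly_Mapping.keys m.
         (case v of Xv k \<Rightarrow> x k | _ \<Rightarrow> 0) ^ Poly_Mapping.lookup m v))"

definition ideal_gen :: "'a::comm_ring_1 set \<Rightarrow> 'a set" where
  "ideal_gen S = {p. \<exists>T c. finite T \<and> T \<subseteq> S \<and> p = (\<Sum>g\<in>T. c g * g)}"

text \<open>Smoothness and transversal intersection of a finite family of
  hypersurfaces {H_t = 0} (t in I) of P^n, checked at geometric points
  (points over the algebraic closure of k): at every nonzero point x of
  (alg. closure)^(n+1), the gradients of those H_t vanishing at x are
  linearly independent.  For a single member this is smoothness.\<close>
definition smooth_transversal :: "nat \<Rightarrow> 'i set \<Rightarrow> ('i \<Rightarrow> 'k::field mpoly) \<Rightarrow> bool" where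
  "smooth_transversal n I H \<longleftrightarrow>
    (\<forall>x :: nat \<Rightarrow> 'k alg_closure. (\<exists>k\<le>n. x k \<noteq> 0) \<longrightarrow>
      (\<forall>c :: 'i \<Rightarrow> 'k alg_closure.
        (\<forall>k\<le>n. (\<Sum>t\<in>{t\<in>I. evalX to_ac x (H t) = 0}. c t * evalX to_ac x (pdX k (H t))) = 0)
        \<longrightarrow> (\<forall>t\<in>{t\<in>I. evalX to_ac x (H t) = 0}. c t = 0)))"

end

theory Submission imports Defs "Jordan_Normal_Form.Determinant" begin

lemma ig_gen: "g \<in> S \<Longrightarrow> g \<in> ideal_gen S"
  unfolding ideal_gen_def
  by (rule CollectI, rule exI[of _ "{g}"], rule exI[of _ "\<lambda>_. 1"], simp)

lemma ig_zero: "0 \<in> ideal_gen S"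
  unfolding ideal_gen_def
  by (rule CollectI, rule exI[of _ "{}"], simp)

lemma ig_elim: assumes "p \<in> ideal_gen S"
  obtains T c where "finite T" "T \<subseteq> S" "p = (\<Sum>g\<in>T. c g * g)"
  using assms unfolding ideal_gen_def mem_Collect_eq by (elim exE conjE) blast

lemma ig_intro: "finite T \<Longrightarrow> T \<subseteq> S \<Longrightarrow> p = (\<Sum>g\<in>T. c g * g) \<Longrightarrow> p \<in> ideal_gen S"
  unfolding ideal_gen_def mem_Collect_eq by (intro exI conjI)

lemma ig_add: assumes "p \<in> ideal_gen S" "q \<in> ideal_gen S" shows "p + q \<in> ideal_gen S"
proof -
  obtain T1 c1 where h1: "finite T1" "T1 \<subseteq> S" "p = (\<Sum>g\<in>T1. c1 g * g)" using ig_elim[OF assms(1)] .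
  obtain T2 c2 where h2: "finite T2" "T2 \<subseteq> S" "q = (\<Sum>g\<in>T2. c2 g * g)" using ig_elim[OF assms(2)] .
  define c where "c g = (if g \<in> T1 then c1 g else 0) + (if g \<in> T2 then c2 g else 0)" for g
  have fin: "finite (T1 \<union> T2)" using h1(1) h2(1) by simp
  have "(\<Sum>g\<in>T1 \<union> T2. c g * g) = (\<Sum>g\<in>T1 \<union> T2. (if g \<in> T1 then c1 g * g else 0)) + (\<Sum>g\<in>T1 \<union> T2. (if g \<in> T2 then c2 g * g else 0))"
  proof -
    have "c g * g = (if g \<in> T1 then c1 g * g else 0) + (if g \<in> T2 then c2 g * g else 0)" for g
      unfolding c_def by (simp add: distrib_right)
    then show ?thesis by (simp only: sum.distrib)
  qed
  also have "\<dots> = p + q"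
  proof -
    have e1: "(T1 \<union> T2) \<inter> {g. g \<in> T1} = T1" "(T1 \<union> T2) \<inter> {g. g \<in> T2} = T2" by auto
    show ?thesis unfolding sum.If_cases[OF fin] e1 h1(3) h2(3) by simp
  qed
  finally have "p + q = (\<Sum>g\<in>T1 \<union> T2. c g * g)" by simp
  moreover have "T1 \<union> T2 \<subseteq> S" using h1(2) h2(2) by simp
  ultimately show ?thesis using fin by (rule_tac ig_intro)
qed

lemma ig_mult: assumes "p \<in> ideal_gen S" shows "a * p \<in> ideal_gen S"
proof -
  obtain T c where h: "finite T" "T \<subseteq> S" "p = (\<Sum>g\<in>T. c g * g)" using ig_elim[OF assms] .
  have "a * p = (\<Sum>g\<in>T. (a * c g) * g)" using h(3) by (simp add: sum_distrib_left mult.assoc)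
  then show ?thesis using h(1,2) by (rule_tac ig_intro)
qed

lemma ig_sum: "(\<And>x. x \<in> Y \<Longrightarrow> h x \<in> ideal_gen S) \<Longrightarrow> (\<Sum>x\<in>Y. h x) \<in> ideal_gen S"
proof (induction Y rule: infinite_finite_induct)
  case (infinite A) then show ?case by (simp add: ig_zero)
next
  case empty then show ?case by (simp add: ig_zero)
next
  case (insert y F)
  have "h y \<in> ideal_gen S" using insert.prems by simp
  moreover have "(\<Sum>x\<in>F. h x) \<in> ideal_gen S" using insert.IH insert.prems by simp
  ultimately show ?case using insert.hyps by (simp add: ig_add)
qed

lemma ig_diff: assumes "p \<in> ideal_gen S" "q \<in> ideal_gen S" shows "p - q \<in> ideal_gen S"
proof -
  have "p + (-1) * q \<in> ideal_gen S" by (rule ig_add[OF assms(1) ig_mult[OF assms(2)]])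
  moreover have "p + (-1) * q = p - q" by simp
  ultimately show ?thesis by simp
qed

theorem mainTheorem9:
  fixes n r s :: nat and d e jj :: "nat \<Rightarrow> nat"
    and F G :: "nat \<Rightarrow> 'k::field_char_0 mpoly"
    and J :: "'k mpoly set" and A A' :: "'k mpoly"
  assumes "r + s \<ge> 1" and "n \<ge> 2"
    and "\<forall>i\<in>{1..r}. d i \<ge> 1" and "\<forall>j\<in>{1..s}. e j \<ge> 1"
    and "\<forall>i\<in>{1..r}. in_Pdeg n (d i) (F i)"
    and "\<forall>j\<in>{1..s}. in_Pdeg n (e j) (G j)"
    and "smooth_transversal n ({1..r} <+> {1..s}) (case_sum F G)"
    and "r \<le> n + 1"
    and "s \<ge> n + 1 - r"
    and "strict_mono_on {1..n + 1 - r} jj" and "jj ` {1..n + 1 - r} \<subseteq> {1..s}"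
  defines "J \<equiv> ideal_gen
      ({(\<Sum>i=1..r. pdX k (F i) * Var (Mu i)) + (\<Sum>j=1..s. pdX k (G j) * Var (La j)) | k. k \<le> n}
       \<union> F ` {1..r} \<union> {G j * Var (La j) | j. j \<in> {1..s}})"
    and "A \<equiv> (\<Sum>\<sigma> | \<sigma> permutes {0..n}. of_int (sign \<sigma>) *
       (\<Prod>p\<in>{0..n}. if p < r then pdX (\<sigma> p) (F (p + 1))
                     else pdX (\<sigma> p) (G (jj (p - r + 1)))))"
    and "A' \<equiv> A * (\<Prod>j\<in>{1..s} - jj ` {1..n + 1 - r}. G j)"
  shows "(\<forall>i\<in>{1..r}. A' * Var (Mu i) \<in> J) \<and> (\<forall>j\<in>{1..s}. A' * Var (La j) \<in> J)"
proof -
  define T where "T = jj ` {1..n + 1 - r}"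
  define Oth where "Oth = {1..s} - T"
  define P where "P = (\<Prod>j\<in>Oth. G j)"
  define H where "H p = (if p < r then F (p + 1) else G (jj (p - r + 1)))" for p
  define w where "w p = (if p < r then Var (Mu (p + 1)) else Var (La (jj (p - r + 1))) :: 'k mpoly)" for p
  define N where "N = mat (Suc n) (Suc n) (\<lambda>(p, k). pdX k (H p))"
  define a where "a k q = adj_mat N $$ (k, q)" for k q
  define E where "E k = (\<Sum>i=1..r. pdX k (F i) * Var (Mu i)) + (\<Sum>j=1..s. pdX k (G j) * Var (La j))" for k
  define R where "R k = (\<Sum>j\<in>Oth. pdX k (G j) * Var (La j))" for k
  have Ts: "T \<subseteq> {1..s}" using assms(11) T_def by simp
  have injT: "inj_on jj {1..n + 1 - r}" using assms(10) by (rule strict_mono_on_imp_inj_on)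
  have A'eq: "A' = A * P" unfolding A'_def P_def Oth_def T_def ..
  have Ndim: "N \<in> carrier_mat (Suc n) (Suc n)" unfolding N_def by simp
  have Aeq: "A = det N"
  proof -
    have "det N = (\<Sum>\<sigma> | \<sigma> permutes {0..n}. of_int (sign \<sigma>) * (\<Prod>p\<in>{0..n}. N $$ (p, \<sigma> p)))"
      unfolding det_def using Ndim by (simp add: atLeastLessThanSuc_atLeastAtMost)
    also have "\<dots> = A" unfolding A_def
    proof (rule sum.cong[OF refl], rule arg_cong[where f = "\<lambda>x. _ * x"], rule prod.cong[OF refl])
      fix \<sigma> p assume s: "\<sigma> \<in> {\<sigma>. \<sigma> permutes {0..n}}" and p: "p \<in> {0..n}"
      have s': "\<sigma> permutes {0..n}" using s by simp
      have "\<sigma> p \<in> {0..n}" unfolding permutes_in_image[OF s'] using p .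
      then show "N $$ (p, \<sigma> p) = (if p < r then pdX (\<sigma> p) (F (p + 1)) else pdX (\<sigma> p) (G (jj (p - r + 1))))"
        using p unfolding N_def H_def by auto
    qed
    finally show ?thesis by simp
  qed
  have cof: "(\<Sum>k<Suc n. N $$ (p, k) * a k q) = (if p = q then A else 0)" if "p \<le> n" "q \<le> n" for p q
  proof -
    have "(N * adj_mat N) $$ (p, q) = (det N \<cdot>\<^sub>m 1\<^sub>m (Suc n)) $$ (p, q)" using adj_mat(2)[OF Ndim] by simp
    then show ?thesis using that adj_mat(1)[OF Ndim] Ndim unfolding a_def Aeq
      by (simp add: scalar_prod_def lessThan_atLeast0)
  qed
  have finO: "finite Oth" unfolding Oth_def by simp
  have PLa: "P * Var (La j) \<in> J" if j: "j \<in> Oth" for j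
  proof -
    have "P = G j * (\<Prod>i\<in>Oth - {j}. G i)" unfolding P_def using prod.remove[OF finO j] .
    then have "P * Var (La j) = (\<Prod>i\<in>Oth - {j}. G i) * (G j * Var (La j))" by (simp add: ac_simps)
    moreover have "G j * Var (La j) \<in> J" unfolding J_def
      by (rule ig_gen) (use j Oth_def in blast)
    ultimately show ?thesis unfolding J_def by (simp add: ig_mult)
  qed
  have PR: "P * R k \<in> J" for k
  proof -
    have "P * R k = (\<Sum>j\<in>Oth. pdX k (G j) * (P * Var (La j)))" unfolding R_def
      by (simp add: sum_distrib_left ac_simps)
    also have "\<dots> \<in> J" unfolding J_def by (rule ig_sum, rule ig_mult, use PLa J_def in simp)
    finally show ?thesis .
  qed
  have EJ: "E k \<in> J" if "k \<le> n" for k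
    unfolding J_def E_def by (rule ig_gen) (use that in blast)
  have Edec: "E k = (\<Sum>p\<in>{0..n}. pdX k (H p) * w p) + R k" for k
  proof -
    define f where "f j = pdX k (G j) * Var (La j)" for j
    have s1: "(\<Sum>j=1..s. f j) = R k + (\<Sum>j\<in>T. f j)"
      unfolding R_def Oth_def f_def using sum.subset_diff[OF Ts, of f] f_def by simp
    have s2: "(\<Sum>j\<in>T. f j) = (\<Sum>t\<in>{1..n + 1 - r}. f (jj t))"
      unfolding T_def using sum.reindex[OF injT, of f] by simp
    have s3: "(\<Sum>t\<in>{1..n + 1 - r}. f (jj t)) = (\<Sum>p\<in>{r..n}. pdX k (H p) * w p)"
      by (rule sum.reindex_bij_witness[of _ "\<lambda>p. p - r + 1" "\<lambda>t. t + r - 1"])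
         (use assms(8) in \<open>auto simp: f_def H_def w_def\<close>)
    have s4: "(\<Sum>i=1..r. pdX k (F i) * Var (Mu i)) = (\<Sum>p\<in>{0..<r}. pdX k (H p) * w p)"
      by (rule sum.reindex_bij_witness[of _ "\<lambda>p. p + 1" "\<lambda>i. i - 1"])
         (auto simp: H_def w_def)
    have s5: "(\<Sum>p\<in>{0..n}. pdX k (H p) * w p) = (\<Sum>p\<in>{0..<r}. pdX k (H p) * w p) + (\<Sum>p\<in>{r..n}. pdX k (H p) * w p)"
    proof -
      have eq: "{0..n} = {0..<r} \<union> {r..n}" using assms(8) by auto
      show ?thesis unfolding eq by (rule sum.union_disjoint) auto
    qed
    show ?thesis unfolding E_def s5 s4 using s1 s2 s3 f_def by (simp add: ac_simps)
  qed
  have key: "(\<Sum>k<Suc n. a k q * E k) = A * w q + (\<Sum>k<Suc n. a k q * R k)" if q: "q \<le> n" for q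
  proof -
    have "(\<Sum>k<Suc n. a k q * E k) = (\<Sum>k<Suc n. a k q * (\<Sum>p\<in>{0..n}. N $$ (p, k) * w p)) + (\<Sum>k<Suc n. a k q * R k)"
    proof -
      have "a k q * E k = a k q * (\<Sum>p\<in>{0..n}. N $$ (p, k) * w p) + a k q * R k" if "k < Suc n" for k
        unfolding Edec N_def using that by (simp add: distrib_left)
      then show ?thesis by (simp add: sum.distrib)
    qed
    also have "(\<Sum>k<Suc n. a k q * (\<Sum>p\<in>{0..n}. N $$ (p, k) * w p)) = (\<Sum>p\<in>{0..n}. (\<Sum>k<Suc n. N $$ (p, k) * a k q) * w p)"
    proof -
      have "(\<Sum>k<Suc n. a k q * (\<Sum>p\<in>{0..n}. N $$ (p, k) * w p)) = (\<Sum>k<Suc n. \<Sum>p\<in>{0..n}. (N $$ (p, k) * a k q) * w p)"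
        by (rule sum.cong[OF refl]) (simp add: sum_distrib_left ac_simps)
      also have "\<dots> = (\<Sum>p\<in>{0..n}. \<Sum>k<Suc n. (N $$ (p, k) * a k q) * w p)"
        by (rule sum.swap)
      also have "\<dots> = (\<Sum>p\<in>{0..n}. (\<Sum>k<Suc n. N $$ (p, k) * a k q) * w p)"
        by (simp only: sum_distrib_right)
      finally show ?thesis .
    qed
    also have "\<dots> = (\<Sum>p\<in>{0..n}. (if p = q then A else 0) * w p)"
      by (rule sum.cong[OF refl]) (use cof q in simp)
    also have "\<dots> = (\<Sum>p\<in>{0..n}. if p = q then A * w p else 0)"
      by (rule sum.cong) auto
    also have "\<dots> = A * w q" using q by (simp only: sum.delta finite_atLeastAtMost) simp
    finally show ?thesis .
  qed
  have main: "A' * w q \<in> J" if q: "q \<le> n" for q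
  proof -
    have "A' * w q = P * (\<Sum>k<Suc n. a k q * E k) - (\<Sum>k<Suc n. a k q * (P * R k))"
      unfolding key[OF q] A'eq by (simp add: sum_distrib_left algebra_simps)
    also have "\<dots> \<in> J"
    proof -
      have "(\<Sum>k<Suc n. a k q * E k) \<in> J" unfolding J_def
        by (rule ig_sum, rule ig_mult) (use EJ J_def in auto)
      moreover have "(\<Sum>k<Suc n. a k q * (P * R k)) \<in> J" unfolding J_def
        by (rule ig_sum, rule ig_mult) (use PR J_def in auto)
      ultimately show ?thesis unfolding J_def by (intro ig_diff ig_mult)
    qed
    finally show ?thesis .
  qed
  show ?thesis
  proof (intro conjI ballI)
    fix i assume i: "i \<in> {1..r}"
    then have "w (i - 1) = Var (Mu i)" unfolding w_def by auto
    moreover have "i - 1 \<le> n" using i assms(8) by auto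
    ultimately show "A' * Var (Mu i) \<in> J" using main by metis
  next
    fix j assume j: "j \<in> {1..s}"
    show "A' * Var (La j) \<in> J"
    proof (cases "j \<in> T")
      case True
      then obtain t where t: "t \<in> {1..n + 1 - r}" "j = jj t" unfolding T_def by auto
      then have "w (t + r - 1) = Var (La j)" unfolding w_def by auto
      moreover have "t + r - 1 \<le> n" using t assms(8) by auto
      ultimately show ?thesis using main by metis
    next
      case False
      then have "j \<in> Oth" using j Oth_def by simp
      then have "A * (P * Var (La j)) \<in> J" using PLa J_def by (simp add: ig_mult)
      then show ?thesis by (simp add: A'eq ac_simps)
    qed
  qed
qed
end
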